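(* Let $\Gamma\in(1,2]$ and consider the two-dimensional special relativistic hydrodynamics (RHD) system with ideal-gas equation of state, as described in the context. Let $\bm{U}_{LD},\bm{U}_{RD},\bm{U}_{LU},\bm{U}_{RU}\in\mathcal{G}$ be four admissible states, and let $\bm{F}_{\ast}=\bm{F}(\bm{U}_{\ast})$, $\bm{G}_{\ast}=\bm{G}(\bm{U}_{\ast})$ for $\ast\in\{LD,RD,LU,RU\}$. Define the wave speeds $$S_L=2\min_{\ast}\lambda_A^{(1)}(\bm{U}_{\ast}),\quad S_R=2\max_{\ast}\lambda_A^{(4)}(\bm{U}_{\ast}),\quad S_D=2\min_{\ast}\lambda_B^{(1)}(\bm{U}_{\ast}),\quad S_U=2\max_{\ast}\lambda_B^{(4)}(\bm{U}_{\ast}),$$ the min/max being over $\ast\in\{LD,RD,LU,RU\}$, and assume $S_L<0<S_R$ and $S_D<0<S_U$. Then the intermediate state of the two-dimensional HLL Riemann solver $$\bm{U}^{\ast}=\frac{S_RS_U\bm{U}_{RU}+S_LS_D\bm{U}_{LD}-S_RS_D\bm{U}_{RD}-S_LS_U\bm{U}_{LU}}{(S_R-S_L)(S_U-S_D)}-\frac{S_U(\bm{F}_{RU}-\bm{F}_{LU})-S_D(\bm{F}_{RD}-\bm{F}_{LD})}{(S_R-S_L)(S_U-S_D)}-\frac{S_R(\bm{G}_{RU}-\bm{G}_{RD})-S_L(\bm{G}_{LU}-\bm{G}_{LD})}{(S_R-S_L)(S_U-S_D)}$$ is admissible, i.e. writing $\bm{U}^\ast=(D^\ast,\bm{m}^\ast,E^\ast)^T$,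 one has $D^{\ast}>0$, $E^{\ast}>0$ and $(E^{\ast})^2-(D^{\ast})^2-|\bm{m}^{\ast}|^2>0$.
   Context: Units with speed of light $c=1$. Primitive variables: rest-mass density $\rho$, velocity $\bm{u}=(u,v)$ with $|\bm{u}|<1$, pressure $p$. Lorentz factor $\gamma=1/\sqrt{1-|\bm{u}|^2}$, specific internal energy $e$ with $p=(\Gamma-1)\rho e$, specific enthalpy $h=1+e+p/\rho$, sound speed $c_s=\sqrt{\Gamma p/(\rho h)}$. Conservative variables $\bm{U}=(D,\bm{m},E)^T$ with $D=\rho\gamma$, $\bm{m}=Dh\gamma\bm{u}$, $E=Dh\gamma-p$; fluxes $\bm{F}(\bm{U})=(Du,\ \bm{m}u+p(1,0),\ (E+p)u)^T$ and $\bm{G}(\bm{U})=(Dv,\ \bm{m}v+p(0,1),\ (E+p)v)^T$, the system being $\partial_t\bm{U}+\partial_x\bm{F}+\partial_y\bm{G}=0$. The admissible set is $\mathcal{G}=\{\bm{U}=(D,\bm{m},E)^T: \rho>0,\ p>0,\ |\bm{u}|<1\}$, equivalently $\{D>0,\ E>\sqrt{D^2+|\bm{m}|^2}\}$ (primitive variables are recovered from $\bm{U}\in\mathcal{G}$). For $i=1,2$ (with $u_1=u$, $u_2=v$) the extreme eigenvalues of $\partial\bm{F}_i/\partial\bm{U}$ are $$\lambda_{i}^{(1),(4)}(\bm{U})=\frac{u_i(1-c_s^2)\mp c_s\gamma^{-1}\sqrt{1-u_i^2-c_s^2(|\bm{u}|^2-u_i^2)}}{1-c_s^2|\bm{u}|^2};$$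 $\lambda_A^{(k)}:=\lambda_1^{(k)}$ (the $x$-direction, flux $\bm{F}$) and $\lambda_B^{(k)}:=\lambda_2^{(k)}$ (the $y$-direction, flux $\bm{G}$), $k=1,4$. *)

theory Defs
  imports Complex_Main
begin

(* Primitive variables (rho, u, v, p); conservative vectors (D, m1, m2, E). *)
type_synonym prim = "real \<times> real \<times> real \<times> real"
type_synonym cons = "real \<times> real \<times> real \<times> real"

definition admissible_prim :: "real \<Rightarrow> prim \<Rightarrow> bool" where
  "admissible_prim Gam w = (case w of (rho, u, v, p) \<Rightarrow> rho > 0 \<and> p > 0 \<and> u\<^sup>2 + v\<^sup>2 < 1)"

definition lorentz :: "prim \<Rightarrow> real" where
  "lorentz w = (case w of (rho, u, v, p) \<Rightarrow> 1 / sqrt (1 - (u\<^sup>2 + v\<^sup>2)))"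

definition enthalpy :: "real \<Rightarrow> prim \<Rightarrow> real" where
  "enthalpy Gam w = (case w of (rho, u, v, p) \<Rightarrow>
     (let e = p / ((Gam - 1) * rho) in 1 + e + p / rho))"

definition sound_speed :: "real \<Rightarrow> prim \<Rightarrow> real" where
  "sound_speed Gam w = (case w of (rho, u, v, p) \<Rightarrow> sqrt (Gam * p / (rho * enthalpy Gam w)))"

definition consU :: "real \<Rightarrow> prim \<Rightarrow> cons" where
  "consU Gam w = (case w of (rho, u, v, p) \<Rightarrow>
     (let g = lorentz w; h = enthalpy Gam w; D = rho * g in
      (D, D*h*g*u, D*h*g*v, D*h*g - p)))"

definition fluxF :: "real \<Rightarrow> prim \<Rightarrow> cons" where
  "fluxF Gam w = (case w of (rho, u, v, p) \<Rightarrow>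
     (case consU Gam w of (D, m1, m2, E) \<Rightarrow> (D*u, m1*u + p, m2*u, (E + p)*u)))"

definition fluxG :: "real \<Rightarrow> prim \<Rightarrow> cons" where
  "fluxG Gam w = (case w of (rho, u, v, p) \<Rightarrow>
     (case consU Gam w of (D, m1, m2, E) \<Rightarrow> (D*v, m1*v, m2*v + p, (E + p)*v)))"

(* extreme eigenvalues in direction ui (ui = u for x, ui = v for y); sgn = -1 gives lambda^(1), +1 gives lambda^(4) *)
definition eigval :: "real \<Rightarrow> real \<Rightarrow> prim \<Rightarrow> real \<Rightarrow> real" where
  "eigval Gam s w ui = (case w of (rho, u, v, p) \<Rightarrow>
     (let cs = sound_speed Gam w; g = lorentz w; q = u\<^sup>2 + v\<^sup>2 in
      (ui * (1 - cs\<^sup>2) + s * cs / g * sqrt (1 - ui\<^sup>2 - cs\<^sup>2 * (q - ui\<^sup>2))) / (1 - cs\<^sup>2 * q)))"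

definition lamA1 :: "real \<Rightarrow> prim \<Rightarrow> real" where
  "lamA1 Gam w = eigval Gam (-1) w (fst (snd w))"
definition lamA4 :: "real \<Rightarrow> prim \<Rightarrow> real" where
  "lamA4 Gam w = eigval Gam 1 w (fst (snd w))"
definition lamB1 :: "real \<Rightarrow> prim \<Rightarrow> real" where
  "lamB1 Gam w = eigval Gam (-1) w (fst (snd (snd w)))"
definition lamB4 :: "real \<Rightarrow> prim \<Rightarrow> real" where
  "lamB4 Gam w = eigval Gam 1 w (fst (snd (snd w)))"

definition comp :: "cons \<Rightarrow> nat \<Rightarrow> real" where
  "comp U k = (case U of (D, m1, m2, E) \<Rightarrow>
     (if k = 0 then D else if k = 1 then m1 else if k = 2 then m2 else E))"

definition wave_SL :: "real \<Rightarrow> prim \<Rightarrow> prim \<Rightarrow> prim \<Rightarrow> prim \<Rightarrow> real" where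
  "wave_SL Gam wLD wRD wLU wRU = 2 * Min {lamA1 Gam wLD, lamA1 Gam wRD, lamA1 Gam wLU, lamA1 Gam wRU}"
definition wave_SR :: "real \<Rightarrow> prim \<Rightarrow> prim \<Rightarrow> prim \<Rightarrow> prim \<Rightarrow> real" where
  "wave_SR Gam wLD wRD wLU wRU = 2 * Max {lamA4 Gam wLD, lamA4 Gam wRD, lamA4 Gam wLU, lamA4 Gam wRU}"
definition wave_SD :: "real \<Rightarrow> prim \<Rightarrow> prim \<Rightarrow> prim \<Rightarrow> prim \<Rightarrow> real" where
  "wave_SD Gam wLD wRD wLU wRU = 2 * Min {lamB1 Gam wLD, lamB1 Gam wRD, lamB1 Gam wLU, lamB1 Gam wRU}"
definition wave_SU :: "real \<Rightarrow> prim \<Rightarrow> prim \<Rightarrow> prim \<Rightarrow> prim \<Rightarrow> real" where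
  "wave_SU Gam wLD wRD wLU wRU = 2 * Max {lamB4 Gam wLD, lamB4 Gam wRD, lamB4 Gam wLU, lamB4 Gam wRU}"

definition hll2d :: "real \<Rightarrow> real \<Rightarrow> real \<Rightarrow> real \<Rightarrow> real \<Rightarrow> prim \<Rightarrow> prim \<Rightarrow> prim \<Rightarrow> prim \<Rightarrow> nat \<Rightarrow> real" where
  "hll2d Gam SL SR SD SU wLD wRD wLU wRU k =
     (let U = (\<lambda>w. comp (consU Gam w) k); F = (\<lambda>w. comp (fluxF Gam w) k);
          G = (\<lambda>w. comp (fluxG Gam w) k); den = (SR - SL) * (SU - SD) in
      (SR*SU*U wRU + SL*SD*U wLD - SR*SD*U wRD - SL*SU*U wLU) / den
      - (SU*(F wRU - F wLU) - SD*(F wRD - F wLD)) / den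
      - (SR*(G wRU - G wRD) - SL*(G wLU - G wLD)) / den)"

end

theory Submission
  imports Defs
begin

lemma lc: "(a::real) = b + k*(x - y) \<Longrightarrow> x = y \<Longrightarrow> a = b" by simp

lemma core_alg:
  fixes rho u v p G a g h c r S lam th :: real
  assumes rho: "rho>0" and p: "p>0" and q: "u\<^sup>2+v\<^sup>2<1" and G1: "1<G" and G2: "G\<le>2"
  and r: "r = sqrt(1-(u\<^sup>2+v\<^sup>2))" and g: "g = 1/r"
  and th: "th = p/rho" and h: "h = 1 + th/(G-1) + th"
  and c: "c = sqrt(G*th/h)"
  and S: "S = sqrt(1 - u\<^sup>2 - c\<^sup>2*v\<^sup>2)"
  and lam0: "lam = (u*(1-c\<^sup>2) + c*S/g)/(1-c\<^sup>2*(u\<^sup>2+v\<^sup>2))"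
  and a: "lam \<le> a"
  shows "rho*g*(a-u) > 0 \<and> (rho*h*g\<^sup>2*(a-u) - a*p) > 0 \<and>
     (rho*h*g\<^sup>2*(a-u) - a*p)\<^sup>2 - (rho*g*(a-u))\<^sup>2 - (rho*h*g\<^sup>2*u*(a-u) - p)\<^sup>2 - (rho*h*g\<^sup>2*v*(a-u))\<^sup>2 > 0"
proof -
  define qq where "qq = u\<^sup>2+v\<^sup>2"
  have qq1: "qq < 1" using q qq_def by simp
  have qq0: "qq \<ge> 0" unfolding qq_def by simp
  have r0: "r > 0" using r qq1 qq_def by simp
  have r2: "r\<^sup>2 = 1 - qq" using r qq1 qq_def by simp
  have g0: "g > 0" using g r0 by simp
  have lam: "lam = (u*(1-c\<^sup>2) + c*r*S)/(1-c\<^sup>2*(u\<^sup>2+v\<^sup>2))" using lam0 g r0 by simp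
  have gr: "g * r = 1" using g r0 by simp
  have th0: "th > 0" using th rho p by simp
  have hth: "h = 1 + th/(G-1) + th" by (rule h)
  have tG: "th/(G-1) \<ge> th" using th0 G1 G2 by (simp add: field_simps)
  define t where "t = th/(G-1)"
  have Gt: "G*t = th + t" using G1 unfolding t_def by (simp add: field_simps)
  have t0: "t \<ge> th" using tG t_def by simp
  have h': "h = 1 + t + th" using h t_def by simp
  have h0: "h > 0" using h' t0 th0 by simp
  have c2: "c\<^sup>2 = G*th/h" using c G1 th0 h0 by simp
  have c0: "c > 0" using c G1 th0 h0 by simp
  have c2h: "c\<^sup>2 * h = G*th" using c2 h0 by simp
  have c2lt: "c\<^sup>2 < 1"
  proof -
    have "(G-1)*th \<le> 1*th" using G2 th0 by (intro mult_right_mono) auto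
    then have "G*th - th \<le> th" by (simp add: algebra_simps)
    then have "G*th < h" using h' t0 th0 by linarith
    then have "h * c\<^sup>2 < h * 1" using c2h by (simp add: mult.commute)
    then show ?thesis using mult_less_cancel_left_pos[OF h0] by blast
  qed
  have c2v: "c\<^sup>2*v\<^sup>2 \<le> 1*v\<^sup>2" using c2lt by (intro mult_right_mono) auto
  have c2q: "c\<^sup>2*qq \<le> 1*qq" using c2lt qq0 by (intro mult_right_mono) auto
  have Sarg: "1 - u\<^sup>2 - c\<^sup>2*v\<^sup>2 > 0" using c2v q by simp
  have S0: "S > 0" using S Sarg by simp
  have S2: "S\<^sup>2 = 1 - u\<^sup>2 - c\<^sup>2*v\<^sup>2" using S Sarg by simp
  define Dl where "Dl = 1 - c\<^sup>2*qq"
  have Dl0: "Dl > 0" using c2q qq1 Dl_def by simp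
  define L where "L = u*(1-c\<^sup>2) + c*r*S"
  have lamL: "Dl*lam = L" using lam Dl0 unfolding L_def Dl_def qq_def by simp
  define K0 where "K0 = u\<^sup>2*(1-c\<^sup>2) - c\<^sup>2*(1-qq)"
  define P where "P = (\<lambda>x. Dl*x\<^sup>2 - 2*u*(1-c\<^sup>2)*x + K0)"
  have "Dl * P lam = L\<^sup>2 - 2*u*(1-c\<^sup>2)*L + Dl*K0"
    unfolding P_def lamL[symmetric] by (simp add: power2_eq_square algebra_simps)
  also have "\<dots> = c\<^sup>2*r\<^sup>2*S\<^sup>2 - u\<^sup>2*(1-c\<^sup>2)\<^sup>2 + Dl*K0"
    unfolding L_def by (simp add: power2_eq_square algebra_simps)
  also have "\<dots> = c\<^sup>2*(1-qq)*(1 - u\<^sup>2 - c\<^sup>2*v\<^sup>2) - u\<^sup>2*(1-c\<^sup>2)\<^sup>2 + Dl*K0"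
    by (simp only: r2 S2)
  also have "\<dots> = 0"
    unfolding K0_def Dl_def qq_def by (simp add: power2_eq_square algebra_simps)
  finally have Plam: "P lam = 0" using Dl0 by simp
  have rS: "c*r*S \<ge> 0" using c0 r0 S0 by simp
  have lamu: "lam > u"
  proof -
    have "Dl*(lam - u) = L - Dl*u" using lamL by (simp add: algebra_simps)
    also have "\<dots> = c*r*S - u*c\<^sup>2*(1-qq)" unfolding L_def Dl_def by (simp add: algebra_simps)
    also have "\<dots> = c*r*S - u*c\<^sup>2*r\<^sup>2" by (simp only: r2)
    also have "\<dots> = c*r*(S - u*c*r)" by (simp add: algebra_simps power2_eq_square)
    finally have e1: "Dl*(lam - u) = c*r*(S - u*c*r)" .
    have "S\<^sup>2 - (u*c*r)\<^sup>2 = S\<^sup>2 - u\<^sup>2*c\<^sup>2*r\<^sup>2" by (simp add: power_mult_distrib)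
    also have "\<dots> = (1 - u\<^sup>2 - c\<^sup>2*v\<^sup>2) - u\<^sup>2*c\<^sup>2*(1-qq)" by (simp only: r2 S2)
    also have "\<dots> = (1-u\<^sup>2)*Dl" unfolding Dl_def qq_def by (simp add: algebra_simps)
    finally have e2: "S\<^sup>2 - (u*c*r)\<^sup>2 = (1-u\<^sup>2)*Dl" .
    have "u\<^sup>2 < 1" using q by (smt (verit) zero_le_power2)
    then have "(u*c*r)\<^sup>2 < S\<^sup>2" using e2 Dl0 by (smt (verit) mult_pos_pos)
    then have "u*c*r < S" using S0 by (metis power2_less_imp_less less_imp_le)
    then have "S - u*c*r > 0" by simp
    then have "c*r*(S - u*c*r) > 0" using c0 r0 by simp
    then have "Dl*(lam-u) > 0" using e1 by simp
    then show ?thesis using Dl0 by (simp add: zero_less_mult_iff)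
  qed
  have au: "a > u" using lamu a by simp
  define d where "d = a - u"
  have d0: "d > 0" using au d_def by simp
  have Pa: "P a \<ge> 0"
  proof -
    have e: "P a - P lam = (a - lam)*(Dl*(a+lam) - 2*u*(1-c\<^sup>2))" unfolding P_def by (simp add: power2_eq_square algebra_simps)
    have "2*c*r*S = 2*(Dl*lam) - 2*u*(1-c\<^sup>2)" using lamL L_def by simp
    also have "\<dots> \<le> Dl*(a+lam) - 2*u*(1-c\<^sup>2)"
      using a Dl0 by (simp add: algebra_simps)
    finally have "Dl*(a+lam) - 2*u*(1-c\<^sup>2) \<ge> 0" using rS by simp
    then have "P a - P lam \<ge> 0" using e a by simp
    then show ?thesis using Plam by simp
  qed
  have ineq1: "(1-c\<^sup>2)*d\<^sup>2 \<ge> c\<^sup>2*(1-qq)*(1-a\<^sup>2)"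
  proof -
    have "P a = (1-c\<^sup>2)*d\<^sup>2 - c\<^sup>2*(1-qq)*(1-a\<^sup>2)" unfolding P_def Dl_def K0_def d_def by (simp add: power2_eq_square algebra_simps)
    then show ?thesis using Pa by simp
  qed
  define M where "M = h\<^sup>2 - 1 - 2*h*th"
  have hM: "M + th\<^sup>2 = 2*t + t\<^sup>2" unfolding M_def h' by (simp add: power2_eq_square algebra_simps)
  have tt: "t\<^sup>2 \<ge> th\<^sup>2" using t0 th0 by (intro power_mono) auto
  have M0: "M > 0" using hM tt th0 t0 by linarith
  have key: "c\<^sup>2*M > th\<^sup>2*(1-c\<^sup>2)"
  proof -
    have "G*(2*t+t\<^sup>2) = 2*(G*t) + (G*t)*t" by (simp add: power2_eq_square algebra_simps)
    also have "\<dots> = 2*(th+t) + (th+t)*t" by (simp only: Gt)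
    finally have e: "G*(2*t+t\<^sup>2) - h*th = th + 2*t + t\<^sup>2 - th\<^sup>2" unfolding h' by (simp add: power2_eq_square algebra_simps)
    have "G*(M+th\<^sup>2) = G*(2*t+t\<^sup>2)" by (simp only: hM)
    then have "G*(M+th\<^sup>2) > h*th" using e tt th0 t0 by linarith
    then have "th*(G*(M+th\<^sup>2)) > th*(h*th)" using th0 by simp
    moreover have "h*(c\<^sup>2*(M+th\<^sup>2)) = (c\<^sup>2*h)*(M+th\<^sup>2)" by (simp add: algebra_simps)
    moreover have "(c\<^sup>2*h)*(M+th\<^sup>2) = (G*th)*(M+th\<^sup>2)" by (simp only: c2h)
    moreover have "(G*th)*(M+th\<^sup>2) = th*(G*(M+th\<^sup>2))" by (simp add: algebra_simps)
    moreover have "th*(h*th) = h*th\<^sup>2" by (simp add: power2_eq_square algebra_simps)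
    ultimately have "h*(c\<^sup>2*(M+th\<^sup>2)) > h*th\<^sup>2" by linarith
    then have "c\<^sup>2*(M+th\<^sup>2) > th\<^sup>2" using h0 by simp
    then show ?thesis by (simp add: algebra_simps)
  qed
  have gr2: "g\<^sup>2*(1-qq) = 1"
  proof -
    have "g\<^sup>2*(1-qq) = g\<^sup>2*r\<^sup>2" by (simp only: r2)
    also have "\<dots> = (g*r)\<^sup>2" by (simp add: power_mult_distrib)
    finally show ?thesis using gr by simp
  qed
  define Ew where "Ew = rho*h*g\<^sup>2*(a-u) - a*p"
  define Dw where "Dw = rho*g*(a-u)"
  define m1 where "m1 = rho*h*g\<^sup>2*u*(a-u) - p"
  define m2 where "m2 = rho*h*g\<^sup>2*v*(a-u)"
  have pth: "p = rho*th" using th rho by simp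
  have Qid: "Ew\<^sup>2 - Dw\<^sup>2 - m1\<^sup>2 - m2\<^sup>2 = rho\<^sup>2*(g\<^sup>2*d\<^sup>2*M - th\<^sup>2*(1-a\<^sup>2))"
    apply (rule lc[OF _ gr2, where k = "rho\<^sup>2*h\<^sup>2*g\<^sup>2*d\<^sup>2"])
    unfolding Ew_def Dw_def m1_def m2_def M_def d_def pth qq_def by (simp add: power2_eq_square algebra_simps)
  have inner: "g\<^sup>2*d\<^sup>2*M - th\<^sup>2*(1-a\<^sup>2) > 0"
  proof -
    have e: "g\<^sup>2*d\<^sup>2*M - th\<^sup>2*(1-a\<^sup>2) = g\<^sup>2*(d\<^sup>2*M - th\<^sup>2*(1-a\<^sup>2)*(1-qq))"
      by (rule lc[OF _ gr2, where k = "th\<^sup>2*(1-a\<^sup>2)"]) (simp add: power2_eq_square algebra_simps)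
    have g20: "g\<^sup>2 > 0" using g0 by simp
    have "d\<^sup>2*M - th\<^sup>2*(1-a\<^sup>2)*(1-qq) > 0"
    proof (cases "1 - a\<^sup>2 \<le> 0")
      case True
      have "d\<^sup>2*M > 0" using d0 M0 by simp
      moreover have "th\<^sup>2*(1-a\<^sup>2)*(1-qq) \<le> 0" using True qq1
        by (simp add: mult_nonneg_nonpos mult_nonpos_nonneg)
      ultimately show ?thesis by simp
    next
      case False
      have A: "(1-c\<^sup>2)*d\<^sup>2*M \<ge> c\<^sup>2*(1-qq)*(1-a\<^sup>2)*M" using ineq1 M0 by (simp add: mult_right_mono)
      have pos: "(1-qq)*(1-a\<^sup>2) > 0" using False qq1 by simp
      have B: "c\<^sup>2*M*((1-qq)*(1-a\<^sup>2)) > th\<^sup>2*(1-c\<^sup>2)*((1-qq)*(1-a\<^sup>2))"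
        using key pos by (simp add: mult_strict_right_mono)
      have "(1-c\<^sup>2)*(d\<^sup>2*M - th\<^sup>2*(1-a\<^sup>2)*(1-qq)) > 0"
        using A B by (simp add: algebra_simps)
      then show ?thesis using c2lt by (simp add: zero_less_mult_iff)
    qed
    then show ?thesis using e g20 by simp
  qed
  have Qpos: "Ew\<^sup>2 - Dw\<^sup>2 - m1\<^sup>2 - m2\<^sup>2 > 0" using Qid inner rho by simp
  have Dpos: "Dw > 0" using Dw_def rho g0 au by simp
  have Epos: "Ew > 0"
  proof -
    have e: "Ew - u*m1 = d*(rho*h*g\<^sup>2*(1-u\<^sup>2) - p)" unfolding Ew_def m1_def d_def by (simp add: power2_eq_square algebra_simps)
    have "g\<^sup>2*(1-u\<^sup>2) \<ge> g\<^sup>2*(1-qq)" using qq_def by (simp add: mult_left_mono)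
    then have "g\<^sup>2*(1-u\<^sup>2) \<ge> 1" using gr2 by simp
    then have "rho*h*(g\<^sup>2*(1-u\<^sup>2)) \<ge> rho*h*1" using rho h0 by (intro mult_left_mono) auto
    moreover have "rho*h > p"
    proof -
      have "rho*t > 0" using rho t0 th0 by simp
      then show ?thesis using h' pth rho by (simp add: algebra_simps)
    qed
    ultimately have "rho*h*g\<^sup>2*(1-u\<^sup>2) - p > 0" by (simp add: algebra_simps)
    then have lt: "u*m1 < Ew" using e d0 by (smt (verit) mult_pos_pos)
    have Em: "m1\<^sup>2 < Ew\<^sup>2" using Qpos by (smt (verit) zero_le_power2)
    have u1: "u\<^sup>2 < 1" using q by (smt (verit) zero_le_power2)
    show ?thesis
    proof (rule ccontr)
      assume "\<not> Ew > 0"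
      then have a1: "0 \<le> -Ew" by simp
      have a2: "-Ew < -(u*m1)" using lt by simp
      have "(-Ew)*(-Ew) < (-(u*m1))*(-(u*m1))"
        using a1 a2 by (intro mult_strict_mono) auto
      then have "Ew\<^sup>2 < (u*m1)\<^sup>2" by (simp add: power2_eq_square)
      also have "(u*m1)\<^sup>2 = u\<^sup>2*m1\<^sup>2" by (simp add: power_mult_distrib)
      also have "\<dots> \<le> 1*m1\<^sup>2" using u1 by (intro mult_right_mono) auto
      finally show False using Em by simp
    qed
  qed
  show ?thesis using Qpos Dpos Epos unfolding Ew_def Dw_def m1_def m2_def by simp
qed
definition cv :: "real \<Rightarrow> real \<Rightarrow> real \<Rightarrow> real \<Rightarrow> bool" where
  "cv D m1 m2 E \<longleftrightarrow> D > 0 \<and> E > 0 \<and> E\<^sup>2 - D\<^sup>2 - m1\<^sup>2 - m2\<^sup>2 > 0"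

lemma cv_cong:
  assumes "cv D m1 m2 E" "D' = D" "m1'\<^sup>2 = m1\<^sup>2" "m2'\<^sup>2 = m2\<^sup>2" "E' = E"
  shows "cv D' m1' m2' E'"
  using assms unfolding cv_def by simp

lemma cv_swap: "cv D m1 m2 E \<Longrightarrow> cv D m2 m1 E"
  unfolding cv_def by (simp add: algebra_simps)

lemma cv_scale:
  assumes "cv D m1 m2 E" "t > 0"
  shows "cv (t*D) (t*m1) (t*m2) (t*E)"
proof -
  have e: "(t*E)\<^sup>2 - (t*D)\<^sup>2 - (t*m1)\<^sup>2 - (t*m2)\<^sup>2 = t\<^sup>2*(E\<^sup>2 - D\<^sup>2 - m1\<^sup>2 - m2\<^sup>2)"
    by (simp add: power_mult_distrib algebra_simps)
  show ?thesis using assms unfolding cv_def e by simp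
qed

lemma sqrt_lt_of_sq:
  assumes "x < E\<^sup>2" "E > 0"
  shows "sqrt x < E"
proof -
  have "sqrt x < sqrt (E\<^sup>2)" using assms(1) by (rule real_sqrt_less_mono)
  then show ?thesis using assms(2) by simp
qed

lemma cv_add:
  assumes c1: "cv D1 a1 b1 E1" and c2: "cv D2 a2 b2 E2"
  shows "cv (D1+D2) (a1+a2) (b1+b2) (E1+E2)"
proof -
  define n1 where "n1 = sqrt (D1\<^sup>2+a1\<^sup>2+b1\<^sup>2)"
  define n2 where "n2 = sqrt (D2\<^sup>2+a2\<^sup>2+b2\<^sup>2)"
  have E1: "E1 > 0" and E2: "E2 > 0" using c1 c2 unfolding cv_def by auto
  have q1: "D1\<^sup>2+a1\<^sup>2+b1\<^sup>2 < E1\<^sup>2" using c1 unfolding cv_def by simp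
  have q2: "D2\<^sup>2+a2\<^sup>2+b2\<^sup>2 < E2\<^sup>2" using c2 unfolding cv_def by simp
  have n1E: "n1 < E1" unfolding n1_def using q1 E1 by (rule sqrt_lt_of_sq)
  have n2E: "n2 < E2" unfolding n2_def using q2 E2 by (rule sqrt_lt_of_sq)
  have n20: "n2 \<ge> 0" unfolding n2_def by simp
  have "n1*n2 < E1*E2" using n1E n2E E1 n20 by (intro mult_strict_mono) auto
  define dt where "dt = D1*D2+a1*a2+b1*b2"
  have lag: "(D1\<^sup>2+a1\<^sup>2+b1\<^sup>2)*(D2\<^sup>2+a2\<^sup>2+b2\<^sup>2) - dt\<^sup>2
      = (D1*a2-a1*D2)\<^sup>2 + (D1*b2-b1*D2)\<^sup>2 + (a1*b2-b1*a2)\<^sup>2"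
    unfolding dt_def by (simp add: power2_eq_square algebra_simps)
  have "dt\<^sup>2 \<le> (D1\<^sup>2+a1\<^sup>2+b1\<^sup>2)*(D2\<^sup>2+a2\<^sup>2+b2\<^sup>2)"
  proof -
    have "(D1*a2-a1*D2)\<^sup>2 + (D1*b2-b1*D2)\<^sup>2 + (a1*b2-b1*a2)\<^sup>2 \<ge> 0" by simp
    then show ?thesis using lag by linarith
  qed
  then have "sqrt (dt\<^sup>2) \<le> sqrt ((D1\<^sup>2+a1\<^sup>2+b1\<^sup>2)*(D2\<^sup>2+a2\<^sup>2+b2\<^sup>2))"
    by (rule real_sqrt_le_mono)
  then have "\<bar>dt\<bar> \<le> n1*n2" unfolding n1_def n2_def by (simp add: real_sqrt_mult)
  then have dtE: "dt < E1*E2" using \<open>n1*n2 < E1*E2\<close> by linarith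
  have e: "(E1+E2)\<^sup>2 - (D1+D2)\<^sup>2 - (a1+a2)\<^sup>2 - (b1+b2)\<^sup>2
     = (E1\<^sup>2 - D1\<^sup>2 - a1\<^sup>2 - b1\<^sup>2) + (E2\<^sup>2 - D2\<^sup>2 - a2\<^sup>2 - b2\<^sup>2) + 2*(E1*E2 - dt)"
    unfolding dt_def by (simp add: power2_eq_square algebra_simps)
  have "(E1+E2)\<^sup>2 - (D1+D2)\<^sup>2 - (a1+a2)\<^sup>2 - (b1+b2)\<^sup>2 > 0"
  proof -
    have x1: "E1\<^sup>2 - D1\<^sup>2 - a1\<^sup>2 - b1\<^sup>2 > 0" using q1 by simp
    have x2: "E2\<^sup>2 - D2\<^sup>2 - a2\<^sup>2 - b2\<^sup>2 > 0" using q2 by simp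
    have x3: "2*(E1*E2 - dt) > 0" using dtE by simp
    show ?thesis unfolding e using x1 x2 x3 by (intro add_pos_pos)
  qed
  then show ?thesis using c1 c2 unfolding cv_def by simp
qed

lemma oneD:
  fixes rho u v p G a g h c :: real
  assumes rho: "rho>0" and p: "p>0" and q: "u\<^sup>2+v\<^sup>2<1" and G1: "1<G" and G2: "G\<le>2"
    and gd: "g = 1/sqrt(1-(u\<^sup>2+v\<^sup>2))" and hd: "h = 1 + p/((G-1)*rho) + p/rho"
    and cd: "c = sqrt(G*p/(rho*h))"
    and la: "(u*(1-c\<^sup>2) + c*sqrt(1-u\<^sup>2-c\<^sup>2*v\<^sup>2)/g)/(1-c\<^sup>2*(u\<^sup>2+v\<^sup>2)) \<le> a"
  shows "cv (rho*g*(a-u)) (rho*h*g\<^sup>2*u*(a-u) - p) (rho*h*g\<^sup>2*v*(a-u)) (rho*h*g\<^sup>2*(a-u) - a*p)"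
proof -
  have h': "h = 1 + (p/rho)/(G-1) + p/rho" using hd by (simp add: mult.commute)
  have c': "c = sqrt(G*(p/rho)/h)" using cd by simp
  have "rho*g*(a-u) > 0 \<and> (rho*h*g\<^sup>2*(a-u) - a*p) > 0 \<and>
     (rho*h*g\<^sup>2*(a-u) - a*p)\<^sup>2 - (rho*g*(a-u))\<^sup>2 - (rho*h*g\<^sup>2*u*(a-u) - p)\<^sup>2 - (rho*h*g\<^sup>2*v*(a-u))\<^sup>2 > 0"
    by (rule core_alg[OF rho p q G1 G2 refl gd refl h' c' refl refl la])
  then show ?thesis unfolding cv_def by (simp add: algebra_simps)
qed

lemma consU_eq: "consU G (rho,u,v,p) = (rho*lorentz (rho,u,v,p),
   rho*lorentz (rho,u,v,p)*enthalpy G (rho,u,v,p)*lorentz (rho,u,v,p)*u,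
   rho*lorentz (rho,u,v,p)*enthalpy G (rho,u,v,p)*lorentz (rho,u,v,p)*v,
   rho*lorentz (rho,u,v,p)*enthalpy G (rho,u,v,p)*lorentz (rho,u,v,p) - p)"
  by (simp add: consU_def Let_def)

lemma fluxF_eq: "fluxF G (rho,u,v,p) = (rho*lorentz (rho,u,v,p)*u,
   rho*lorentz (rho,u,v,p)*enthalpy G (rho,u,v,p)*lorentz (rho,u,v,p)*u*u + p,
   rho*lorentz (rho,u,v,p)*enthalpy G (rho,u,v,p)*lorentz (rho,u,v,p)*v*u,
   rho*lorentz (rho,u,v,p)*enthalpy G (rho,u,v,p)*lorentz (rho,u,v,p)*u)"
  by (simp add: fluxF_def consU_def Let_def)

lemma fluxG_eq: "fluxG G (rho,u,v,p) = (rho*lorentz (rho,u,v,p)*v,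
   rho*lorentz (rho,u,v,p)*enthalpy G (rho,u,v,p)*lorentz (rho,u,v,p)*u*v,
   rho*lorentz (rho,u,v,p)*enthalpy G (rho,u,v,p)*lorentz (rho,u,v,p)*v*v + p,
   rho*lorentz (rho,u,v,p)*enthalpy G (rho,u,v,p)*lorentz (rho,u,v,p)*v)"
  by (simp add: fluxG_def consU_def Let_def)

lemma lor_eq: "lorentz (rho,u,v,p) = 1/sqrt(1-(u\<^sup>2+v\<^sup>2))"
  by (simp add: lorentz_def)

lemma enth_eq: "enthalpy G (rho,u,v,p) = 1 + p/((G-1)*rho) + p/rho"
  by (simp add: enthalpy_def Let_def)

lemma ss_eq: "sound_speed G (rho,u,v,p) = sqrt(G*p/(rho*enthalpy G (rho,u,v,p)))"
  by (simp add: sound_speed_def)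

lemma lamA4_eq: "lamA4 G (rho,u,v,p) =
  (u*(1-(sound_speed G (rho,u,v,p))\<^sup>2) + sound_speed G (rho,u,v,p)*sqrt(1-u\<^sup>2-(sound_speed G (rho,u,v,p))\<^sup>2*v\<^sup>2)/lorentz (rho,u,v,p))
   / (1-(sound_speed G (rho,u,v,p))\<^sup>2*(u\<^sup>2+v\<^sup>2))"
  by (simp add: lamA4_def eigval_def Let_def)

lemma lamA1_eq: "lamA1 G (rho,u,v,p) =
  (u*(1-(sound_speed G (rho,u,v,p))\<^sup>2) - sound_speed G (rho,u,v,p)*sqrt(1-u\<^sup>2-(sound_speed G (rho,u,v,p))\<^sup>2*v\<^sup>2)/lorentz (rho,u,v,p))
   / (1-(sound_speed G (rho,u,v,p))\<^sup>2*(u\<^sup>2+v\<^sup>2))"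
  by (simp add: lamA1_def eigval_def Let_def)

lemma lamB4_eq: "lamB4 G (rho,u,v,p) =
  (v*(1-(sound_speed G (rho,u,v,p))\<^sup>2) + sound_speed G (rho,u,v,p)*sqrt(1-v\<^sup>2-(sound_speed G (rho,u,v,p))\<^sup>2*u\<^sup>2)/lorentz (rho,u,v,p))
   / (1-(sound_speed G (rho,u,v,p))\<^sup>2*(u\<^sup>2+v\<^sup>2))"
  by (simp add: lamB4_def eigval_def Let_def)

lemma lamB1_eq: "lamB1 G (rho,u,v,p) =
  (v*(1-(sound_speed G (rho,u,v,p))\<^sup>2) - sound_speed G (rho,u,v,p)*sqrt(1-v\<^sup>2-(sound_speed G (rho,u,v,p))\<^sup>2*u\<^sup>2)/lorentz (rho,u,v,p))
   / (1-(sound_speed G (rho,u,v,p))\<^sup>2*(u\<^sup>2+v\<^sup>2))"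
  by (simp add: lamB1_def eigval_def Let_def)

lemma neg_frac: "(-u*X + Y)/(Dn::real) = - ((u*X - Y)/Dn)"
proof -
  have e: "-u*X + Y = -(u*X - Y)" by simp
  show ?thesis unfolding e minus_divide_left by (rule refl)
qed

lemma A4:
  assumes G1: "1<G" and G2: "G\<le>2" and adm: "admissible_prim G w" and la: "lamA4 G w \<le> a"
  shows "cv (a*comp (consU G w) 0 - comp (fluxF G w) 0) (a*comp (consU G w) 1 - comp (fluxF G w) 1)
            (a*comp (consU G w) 2 - comp (fluxF G w) 2) (a*comp (consU G w) 3 - comp (fluxF G w) 3)"
proof -
  obtain rho u v p where w: "w = (rho,u,v,p)" by (cases w) auto
  have rho: "rho>0" and p: "p>0" and q: "u\<^sup>2+v\<^sup>2<1" using adm unfolding w admissible_prim_def by auto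
  define g where "g = lorentz (rho,u,v,p)"
  define h where "h = enthalpy G (rho,u,v,p)"
  define c where "c = sound_speed G (rho,u,v,p)"
  have gd: "g = 1/sqrt(1-(u\<^sup>2+v\<^sup>2))" unfolding g_def by (rule lor_eq)
  have hd: "h = 1 + p/((G-1)*rho) + p/rho" unfolding h_def by (rule enth_eq)
  have cd: "c = sqrt(G*p/(rho*h))" unfolding c_def h_def by (rule ss_eq)
  have la': "(u*(1-c\<^sup>2) + c*sqrt(1-u\<^sup>2-c\<^sup>2*v\<^sup>2)/g)/(1-c\<^sup>2*(u\<^sup>2+v\<^sup>2)) \<le> a"
    using la unfolding w lamA4_eq c_def g_def .
  have C: "cv (rho*g*(a-u)) (rho*h*g\<^sup>2*u*(a-u) - p) (rho*h*g\<^sup>2*v*(a-u)) (rho*h*g\<^sup>2*(a-u) - a*p)"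
    by (rule oneD[OF rho p q G1 G2 gd hd cd la'])
  show ?thesis unfolding w consU_eq fluxF_eq comp_def g_def[symmetric] h_def[symmetric]
    apply simp
    apply (rule cv_cong[OF C])
    by (simp_all add: power2_eq_square algebra_simps)
qed

lemma A1:
  assumes G1: "1<G" and G2: "G\<le>2" and adm: "admissible_prim G w" and la: "a \<le> lamA1 G w"
  shows "cv (comp (fluxF G w) 0 - a*comp (consU G w) 0) (comp (fluxF G w) 1 - a*comp (consU G w) 1)
            (comp (fluxF G w) 2 - a*comp (consU G w) 2) (comp (fluxF G w) 3 - a*comp (consU G w) 3)"
proof -
  obtain rho u v p where w: "w = (rho,u,v,p)" by (cases w) auto
  have rho: "rho>0" and p: "p>0" and q: "u\<^sup>2+v\<^sup>2<1" using adm unfolding w admissible_prim_def by auto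
  have q': "(-u)\<^sup>2+v\<^sup>2<1" using q by simp
  define g where "g = lorentz (rho,u,v,p)"
  define h where "h = enthalpy G (rho,u,v,p)"
  define c where "c = sound_speed G (rho,u,v,p)"
  have gd: "g = 1/sqrt(1-((-u)\<^sup>2+v\<^sup>2))" unfolding g_def lor_eq by simp
  have hd: "h = 1 + p/((G-1)*rho) + p/rho" unfolding h_def by (rule enth_eq)
  have cd: "c = sqrt(G*p/(rho*h))" unfolding c_def h_def by (rule ss_eq)
  have "a \<le> (u*(1-c\<^sup>2) - c*sqrt(1-u\<^sup>2-c\<^sup>2*v\<^sup>2)/g)/(1-c\<^sup>2*(u\<^sup>2+v\<^sup>2))"
    using la unfolding w lamA1_eq c_def g_def .
  then have la': "(-u*(1-c\<^sup>2) + c*sqrt(1-(-u)\<^sup>2-c\<^sup>2*v\<^sup>2)/g)/(1-c\<^sup>2*((-u)\<^sup>2+v\<^sup>2)) \<le> -a"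
    unfolding power2_minus neg_frac by simp
  have C: "cv (rho*g*(-a - -u)) (rho*h*g\<^sup>2*(-u)*(-a - -u) - p) (rho*h*g\<^sup>2*v*(-a - -u)) (rho*h*g\<^sup>2*(-a - -u) - (-a)*p)"
    by (rule oneD[OF rho p q' G1 G2 gd hd cd la'])
  show ?thesis unfolding w consU_eq fluxF_eq comp_def g_def[symmetric] h_def[symmetric]
    apply simp
    apply (rule cv_cong[OF C])
    by (simp_all add: power2_eq_square algebra_simps)
qed

lemma B4:
  assumes G1: "1<G" and G2: "G\<le>2" and adm: "admissible_prim G w" and la: "lamB4 G w \<le> a"
  shows "cv (a*comp (consU G w) 0 - comp (fluxG G w) 0) (a*comp (consU G w) 1 - comp (fluxG G w) 1)
            (a*comp (consU G w) 2 - comp (fluxG G w) 2) (a*comp (consU G w) 3 - comp (fluxG G w) 3)"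
proof -
  obtain rho u v p where w: "w = (rho,u,v,p)" by (cases w) auto
  have rho: "rho>0" and p: "p>0" and q: "u\<^sup>2+v\<^sup>2<1" using adm unfolding w admissible_prim_def by auto
  have q': "v\<^sup>2+u\<^sup>2<1" using q by simp
  define g where "g = lorentz (rho,u,v,p)"
  define h where "h = enthalpy G (rho,u,v,p)"
  define c where "c = sound_speed G (rho,u,v,p)"
  have gd: "g = 1/sqrt(1-(v\<^sup>2+u\<^sup>2))" unfolding g_def lor_eq by (simp add: add.commute)
  have hd: "h = 1 + p/((G-1)*rho) + p/rho" unfolding h_def by (rule enth_eq)
  have cd: "c = sqrt(G*p/(rho*h))" unfolding c_def h_def by (rule ss_eq)
  have "(v*(1-c\<^sup>2) + c*sqrt(1-v\<^sup>2-c\<^sup>2*u\<^sup>2)/g)/(1-c\<^sup>2*(u\<^sup>2+v\<^sup>2)) \<le> a"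
    using la unfolding w lamB4_eq c_def g_def .
  then have la': "(v*(1-c\<^sup>2) + c*sqrt(1-v\<^sup>2-c\<^sup>2*u\<^sup>2)/g)/(1-c\<^sup>2*(v\<^sup>2+u\<^sup>2)) \<le> a"
    by (simp add: add.commute)
  have C: "cv (rho*g*(a-v)) (rho*h*g\<^sup>2*v*(a-v) - p) (rho*h*g\<^sup>2*u*(a-v)) (rho*h*g\<^sup>2*(a-v) - a*p)"
    by (rule oneD[OF rho p q' G1 G2 gd hd cd la'])
  have C': "cv (rho*g*(a-v)) (rho*h*g\<^sup>2*u*(a-v)) (rho*h*g\<^sup>2*v*(a-v) - p) (rho*h*g\<^sup>2*(a-v) - a*p)"
    using C by (rule cv_swap)
  show ?thesis unfolding w consU_eq fluxG_eq comp_def g_def[symmetric] h_def[symmetric]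
    apply simp
    apply (rule cv_cong[OF C'])
    by (simp_all add: power2_eq_square algebra_simps)
qed

lemma B1:
  assumes G1: "1<G" and G2: "G\<le>2" and adm: "admissible_prim G w" and la: "a \<le> lamB1 G w"
  shows "cv (comp (fluxG G w) 0 - a*comp (consU G w) 0) (comp (fluxG G w) 1 - a*comp (consU G w) 1)
            (comp (fluxG G w) 2 - a*comp (consU G w) 2) (comp (fluxG G w) 3 - a*comp (consU G w) 3)"
proof -
  obtain rho u v p where w: "w = (rho,u,v,p)" by (cases w) auto
  have rho: "rho>0" and p: "p>0" and q: "u\<^sup>2+v\<^sup>2<1" using adm unfolding w admissible_prim_def by auto
  have q': "(-v)\<^sup>2+u\<^sup>2<1" using q by simp
  define g where "g = lorentz (rho,u,v,p)"
  define h where "h = enthalpy G (rho,u,v,p)"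
  define c where "c = sound_speed G (rho,u,v,p)"
  have gd: "g = 1/sqrt(1-((-v)\<^sup>2+u\<^sup>2))" unfolding g_def lor_eq by (simp add: add.commute)
  have hd: "h = 1 + p/((G-1)*rho) + p/rho" unfolding h_def by (rule enth_eq)
  have cd: "c = sqrt(G*p/(rho*h))" unfolding c_def h_def by (rule ss_eq)
  have "a \<le> (v*(1-c\<^sup>2) - c*sqrt(1-v\<^sup>2-c\<^sup>2*u\<^sup>2)/g)/(1-c\<^sup>2*(u\<^sup>2+v\<^sup>2))"
    using la unfolding w lamB1_eq c_def g_def .
  then have la': "(-v*(1-c\<^sup>2) + c*sqrt(1-(-v)\<^sup>2-c\<^sup>2*u\<^sup>2)/g)/(1-c\<^sup>2*((-v)\<^sup>2+u\<^sup>2)) \<le> -a"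
    unfolding power2_minus neg_frac by (simp add: add.commute)
  have C: "cv (rho*g*(-a - -v)) (rho*h*g\<^sup>2*(-v)*(-a - -v) - p) (rho*h*g\<^sup>2*u*(-a - -v)) (rho*h*g\<^sup>2*(-a - -v) - (-a)*p)"
    by (rule oneD[OF rho p q' G1 G2 gd hd cd la'])
  have C': "cv (rho*g*(-a - -v)) (rho*h*g\<^sup>2*u*(-a - -v)) (rho*h*g\<^sup>2*(-v)*(-a - -v) - p) (rho*h*g\<^sup>2*(-a - -v) - (-a)*p)"
    using C by (rule cv_swap)
  show ?thesis unfolding w consU_eq fluxG_eq comp_def g_def[symmetric] h_def[symmetric]
    apply simp
    apply (rule cv_cong[OF C'])
    by (simp_all add: power2_eq_square algebra_simps)
qed

lemma cv_eq:
  assumes "cv D m1 m2 E" "D' = D" "m1' = m1" "m2' = m2" "E' = E"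
  shows "cv D' m1' m2' E'"
  using assms by simp

definition Tc :: "real \<Rightarrow> prim \<Rightarrow> real \<Rightarrow> real \<Rightarrow> nat \<Rightarrow> real" where
  "Tc G w X Y k = X*Y*comp (consU G w) k - Y*comp (fluxF G w) k - X*comp (fluxG G w) k"

lemma corner:
  fixes X Y :: real
  assumes G1: "1<G" and G2: "G\<le>2" and adm: "admissible_prim G w" and X0: "X \<noteq> 0" and Y0: "Y \<noteq> 0"
    and hx4: "X > 0 \<Longrightarrow> lamA4 G w \<le> X/2" and hx1: "X < 0 \<Longrightarrow> X/2 \<le> lamA1 G w"
    and hy4: "Y > 0 \<Longrightarrow> lamB4 G w \<le> Y/2" and hy1: "Y < 0 \<Longrightarrow> Y/2 \<le> lamB1 G w"
  shows "cv (sgn(X*Y)*Tc G w X Y 0) (sgn(X*Y)*Tc G w X Y 1) (sgn(X*Y)*Tc G w X Y 2) (sgn(X*Y)*Tc G w X Y 3)"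
proof -
  define U where "U = (\<lambda>k. comp (consU G w) k)"
  define F where "F = (\<lambda>k. comp (fluxF G w) k)"
  define Gf where "Gf = (\<lambda>k. comp (fluxG G w) k)"
  have al: "cv (sgn X*(X/2*U 0 - F 0)) (sgn X*(X/2*U 1 - F 1)) (sgn X*(X/2*U 2 - F 2)) (sgn X*(X/2*U 3 - F 3))"
  proof (cases "X > 0")
    case True
    have "sgn X = 1" using True by simp
    then show ?thesis using A4[OF G1 G2 adm hx4[OF True]] unfolding U_def F_def by simp
  next
    case False
    then have Xn: "X < 0" using X0 by simp
    have s: "sgn X = -1" using Xn by simp
    show ?thesis unfolding s U_def F_def
      by (rule cv_eq[OF A1[OF G1 G2 adm hx1[OF Xn]]]) (simp_all add: algebra_simps)
  qed
  have be: "cv (sgn Y*(Y/2*U 0 - Gf 0)) (sgn Y*(Y/2*U 1 - Gf 1)) (sgn Y*(Y/2*U 2 - Gf 2)) (sgn Y*(Y/2*U 3 - Gf 3))"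
  proof (cases "Y > 0")
    case True
    have "sgn Y = 1" using True by simp
    then show ?thesis using B4[OF G1 G2 adm hy4[OF True]] unfolding U_def Gf_def by simp
  next
    case False
    then have Yn: "Y < 0" using Y0 by simp
    have s: "sgn Y = -1" using Yn by simp
    show ?thesis unfolding s U_def Gf_def
      by (rule cv_eq[OF B1[OF G1 G2 adm hy1[OF Yn]]]) (simp_all add: algebra_simps)
  qed
  have aY: "\<bar>Y\<bar> > 0" using Y0 by simp
  have aX: "\<bar>X\<bar> > 0" using X0 by simp
  have S: "cv (\<bar>Y\<bar>*(sgn X*(X/2*U 0 - F 0)) + \<bar>X\<bar>*(sgn Y*(Y/2*U 0 - Gf 0)))
              (\<bar>Y\<bar>*(sgn X*(X/2*U 1 - F 1)) + \<bar>X\<bar>*(sgn Y*(Y/2*U 1 - Gf 1)))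
              (\<bar>Y\<bar>*(sgn X*(X/2*U 2 - F 2)) + \<bar>X\<bar>*(sgn Y*(Y/2*U 2 - Gf 2)))
              (\<bar>Y\<bar>*(sgn X*(X/2*U 3 - F 3)) + \<bar>X\<bar>*(sgn Y*(Y/2*U 3 - Gf 3)))"
    by (rule cv_add[OF cv_scale[OF al aY] cv_scale[OF be aX]])
  have sX: "\<bar>X\<bar> = sgn X * X" by (simp add: abs_sgn)
  have sY: "\<bar>Y\<bar> = sgn Y * Y" by (simp add: abs_sgn)
  have sXY: "sgn (X*Y) = sgn X * sgn Y" by (simp add: sgn_mult)
  have key: "\<And>k. sgn(X*Y)*Tc G w X Y k = \<bar>Y\<bar>*(sgn X*(X/2*U k - F k)) + \<bar>X\<bar>*(sgn Y*(Y/2*U k - Gf k))"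
    unfolding sX sY sXY Tc_def U_def F_def Gf_def by (simp add: algebra_simps)
  show ?thesis unfolding key by (rule S)
qed

lemma main:
  fixes G SL SR SD SU :: real
  assumes G1: "1<G" and G2: "G\<le>2"
    and aLD: "admissible_prim G wLD" and aRD: "admissible_prim G wRD"
    and aLU: "admissible_prim G wLU" and aRU: "admissible_prim G wRU"
    and SL: "SL < 0" and SR: "0 < SR" and SD: "SD < 0" and SU: "0 < SU"
    and bA4: "\<And>w. w \<in> {wLD,wRD,wLU,wRU} \<Longrightarrow> lamA4 G w \<le> SR/2"
    and bA1: "\<And>w. w \<in> {wLD,wRD,wLU,wRU} \<Longrightarrow> SL/2 \<le> lamA1 G w"
    and bB4: "\<And>w. w \<in> {wLD,wRD,wLU,wRU} \<Longrightarrow> lamB4 G w \<le> SU/2"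
    and bB1: "\<And>w. w \<in> {wLD,wRD,wLU,wRU} \<Longrightarrow> SD/2 \<le> lamB1 G w"
  shows "cv (hll2d G SL SR SD SU wLD wRD wLU wRU 0) (hll2d G SL SR SD SU wLD wRD wLU wRU 1)
            (hll2d G SL SR SD SU wLD wRD wLU wRU 2) (hll2d G SL SR SD SU wLD wRD wLU wRU 3)"
proof -
  have RU: "cv (sgn(SR*SU)*Tc G wRU SR SU 0) (sgn(SR*SU)*Tc G wRU SR SU 1) (sgn(SR*SU)*Tc G wRU SR SU 2) (sgn(SR*SU)*Tc G wRU SR SU 3)"
    by (rule corner[OF G1 G2 aRU]) (use SL SR SD SU bA4 bA1 bB4 bB1 in auto)
  have LD: "cv (sgn(SL*SD)*Tc G wLD SL SD 0) (sgn(SL*SD)*Tc G wLD SL SD 1) (sgn(SL*SD)*Tc G wLD SL SD 2) (sgn(SL*SD)*Tc G wLD SL SD 3)"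
    by (rule corner[OF G1 G2 aLD]) (use SL SR SD SU bA4 bA1 bB4 bB1 in auto)
  have RD: "cv (sgn(SR*SD)*Tc G wRD SR SD 0) (sgn(SR*SD)*Tc G wRD SR SD 1) (sgn(SR*SD)*Tc G wRD SR SD 2) (sgn(SR*SD)*Tc G wRD SR SD 3)"
    by (rule corner[OF G1 G2 aRD]) (use SL SR SD SU bA4 bA1 bB4 bB1 in auto)
  have LU: "cv (sgn(SL*SU)*Tc G wLU SL SU 0) (sgn(SL*SU)*Tc G wLU SL SU 1) (sgn(SL*SU)*Tc G wLU SL SU 2) (sgn(SL*SU)*Tc G wLU SL SU 3)"
    by (rule corner[OF G1 G2 aLU]) (use SL SR SD SU bA4 bA1 bB4 bB1 in auto)
  have s1: "sgn(SR*SU) = 1" using SR SU by (simp add: sgn_mult)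
  have s2: "sgn(SL*SD) = 1" using SL SD by (simp add: sgn_mult)
  have s3: "sgn(SR*SD) = -1" using SR SD by (simp add: sgn_mult)
  have s4: "sgn(SL*SU) = -1" using SL SU by (simp add: sgn_mult)
  define den where "den = (SR - SL)*(SU - SD)"
  have den0: "den > 0" unfolding den_def using SL SR SD SU by simp
  have i0: "1/den > 0" using den0 by simp
  have Sum: "cv (1/den*(((sgn(SR*SU)*Tc G wRU SR SU 0 + sgn(SL*SD)*Tc G wLD SL SD 0) + sgn(SR*SD)*Tc G wRD SR SD 0) + sgn(SL*SU)*Tc G wLU SL SU 0))
                (1/den*(((sgn(SR*SU)*Tc G wRU SR SU 1 + sgn(SL*SD)*Tc G wLD SL SD 1) + sgn(SR*SD)*Tc G wRD SR SD 1) + sgn(SL*SU)*Tc G wLU SL SU 1))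
                (1/den*(((sgn(SR*SU)*Tc G wRU SR SU 2 + sgn(SL*SD)*Tc G wLD SL SD 2) + sgn(SR*SD)*Tc G wRD SR SD 2) + sgn(SL*SU)*Tc G wLU SL SU 2))
                (1/den*(((sgn(SR*SU)*Tc G wRU SR SU 3 + sgn(SL*SD)*Tc G wLD SL SD 3) + sgn(SR*SD)*Tc G wRD SR SD 3) + sgn(SL*SU)*Tc G wLU SL SU 3))"
    by (rule cv_scale[OF cv_add[OF cv_add[OF cv_add[OF RU LD] RD] LU] i0])
  have key: "\<And>k. hll2d G SL SR SD SU wLD wRD wLU wRU k =
     1/den*(((sgn(SR*SU)*Tc G wRU SR SU k + sgn(SL*SD)*Tc G wLD SL SD k) + sgn(SR*SD)*Tc G wRD SR SD k) + sgn(SL*SU)*Tc G wLU SL SU k)"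
  proof -
    fix k
    show "hll2d G SL SR SD SU wLD wRD wLU wRU k =
     1/den*(((sgn(SR*SU)*Tc G wRU SR SU k + sgn(SL*SD)*Tc G wLD SL SD k) + sgn(SR*SD)*Tc G wRD SR SD k) + sgn(SL*SU)*Tc G wLU SL SU k)"
      unfolding s1 s2 s3 s4 hll2d_def Let_def Tc_def den_def[symmetric]
      by (simp add: diff_divide_distrib[symmetric] add_divide_distrib[symmetric] algebra_simps)
  qed
  show ?thesis unfolding key by (rule Sum)
qed

theorem theorem1:
  fixes Gam :: real and wLD wRD wLU wRU :: prim
  assumes "1 < Gam" and "Gam \<le> 2"
    and "admissible_prim Gam wLD" and "admissible_prim Gam wRD"
    and "admissible_prim Gam wLU" and "admissible_prim Gam wRU"
    and "wave_SL Gam wLD wRD wLU wRU < 0" and "0 < wave_SR Gam wLD wRD wLU wRU"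
    and "wave_SD Gam wLD wRD wLU wRU < 0" and "0 < wave_SU Gam wLD wRD wLU wRU"
  shows "let SL = wave_SL Gam wLD wRD wLU wRU; SR = wave_SR Gam wLD wRD wLU wRU;
             SD = wave_SD Gam wLD wRD wLU wRU; SU = wave_SU Gam wLD wRD wLU wRU;
             Ust = hll2d Gam SL SR SD SU wLD wRD wLU wRU
         in Ust 0 > 0 \<and> Ust 3 > 0 \<and> (Ust 3)\<^sup>2 - (Ust 0)\<^sup>2 - ((Ust 1)\<^sup>2 + (Ust 2)\<^sup>2) > 0"
proof -
  have bA4: "\<And>w. w \<in> {wLD,wRD,wLU,wRU} \<Longrightarrow> lamA4 Gam w \<le> wave_SR Gam wLD wRD wLU wRU/2"
    unfolding wave_SR_def by auto
  have bA1: "\<And>w. w \<in> {wLD,wRD,wLU,wRU} \<Longrightarrow> wave_SL Gam wLD wRD wLU wRU/2 \<le> lamA1 Gam w"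
    unfolding wave_SL_def by auto
  have bB4: "\<And>w. w \<in> {wLD,wRD,wLU,wRU} \<Longrightarrow> lamB4 Gam w \<le> wave_SU Gam wLD wRD wLU wRU/2"
    unfolding wave_SU_def by auto
  have bB1: "\<And>w. w \<in> {wLD,wRD,wLU,wRU} \<Longrightarrow> wave_SD Gam wLD wRD wLU wRU/2 \<le> lamB1 Gam w"
    unfolding wave_SD_def by auto
  have C: "cv (hll2d Gam (wave_SL Gam wLD wRD wLU wRU) (wave_SR Gam wLD wRD wLU wRU) (wave_SD Gam wLD wRD wLU wRU) (wave_SU Gam wLD wRD wLU wRU) wLD wRD wLU wRU 0)
              (hll2d Gam (wave_SL Gam wLD wRD wLU wRU) (wave_SR Gam wLD wRD wLU wRU) (wave_SD Gam wLD wRD wLU wRU) (wave_SU Gam wLD wRD wLU wRU) wLD wRD wLU wRU 1)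
              (hll2d Gam (wave_SL Gam wLD wRD wLU wRU) (wave_SR Gam wLD wRD wLU wRU) (wave_SD Gam wLD wRD wLU wRU) (wave_SU Gam wLD wRD wLU wRU) wLD wRD wLU wRU 2)
              (hll2d Gam (wave_SL Gam wLD wRD wLU wRU) (wave_SR Gam wLD wRD wLU wRU) (wave_SD Gam wLD wRD wLU wRU) (wave_SU Gam wLD wRD wLU wRU) wLD wRD wLU wRU 3)"
    by (rule main[OF assms bA4 bA1 bB4 bB1])
  then show ?thesis unfolding Let_def cv_def by (simp add: algebra_simps)
qed

end
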